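(* Let $Q>0$ and let $\gamma_+$ be the larger root of $\gamma-\log\gamma=Q+1$. For $x>0$ let $w_{ex}(t)=\frac{x}{\gamma_+}t^{\frac{1-\gamma_+}{\gamma_+}}$ on $I=[0,1]$. Then $[w_{ex}]_{RH_1,[0,1]}\le Q$; for every $0<\varepsilon<\frac{1}{\gamma_+-1}$, $$\langle w_{ex}^{1+\varepsilon}\rangle_I=B\big(\langle w_{ex}\rangle_I,\langle w_{ex}\log w_{ex}\rangle_I\big),$$ where $B(x,y)=\frac{v^{\varepsilon}}{1+\varepsilon-\gamma_+\varepsilon}\big(x(1+\varepsilon)-\varepsilon\gamma_+v\big)$ with $v=v(x,y)$ determined by $y=(\log v+\gamma_+)x-v\gamma_+$, $v\le x\le\gamma_+ v$; and finally $\langle w_{ex}^{1+\frac{1}{\gamma_+-1}}\rangle_I=\infty$.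
   Context: $\langle f\rangle_J=\frac1{|J|}\int_J f$. For a weight $w$ on $[0,1]$, $[w]_{RH_1,[0,1]}=\sup_{J\subset[0,1]}\Big\langle \frac{w}{\langle w\rangle_J}\log\frac{w}{\langle w\rangle_J}\Big\rangle_J$, supremum over subintervals $J$. *)

theory Defs
  imports "HOL-Analysis.Analysis"
begin

definition avg :: "real \<Rightarrow> real \<Rightarrow> (real \<Rightarrow> real) \<Rightarrow> real" where
  "avg a b f = (LBINT t:{a..b}. f t) / (b - a)"

definition RH1_01 :: "(real \<Rightarrow> real) \<Rightarrow> ereal" where
  "RH1_01 w = (SUP J \<in> {(a, b). 0 \<le> a \<and> a < b \<and> b \<le> (1::real)}.
      ereal (avg (fst J) (snd J)
        (\<lambda>t. (w t / avg (fst J) (snd J) w) * ln (w t / avg (fst J) (snd J) w))))"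

definition Bfun :: "real \<Rightarrow> real \<Rightarrow> real \<Rightarrow> real \<Rightarrow> real" where
  "Bfun g \<epsilon> x y =
     (let v = (THE v. 0 < v \<and> v \<le> x \<and> x \<le> g * v \<and> y = (ln v + g) * x - v * g)
      in v powr \<epsilon> / (1 + \<epsilon> - g * \<epsilon>) * (x * (1 + \<epsilon>) - \<epsilon> * g * v))"

end

theory Submission
  imports Defs "HOL-Real_Asymp.Real_Asymp"
begin


lemma lim_powr_ln: assumes "r > (0::real)" shows "((\<lambda>t. t powr r * ln t) \<longlongrightarrow> 0) (at_right 0)"
  using assms by real_asymp

lemma cont_powr_ln: assumes "r > (0::real)" shows "continuous_on {0..} (\<lambda>t. t powr r * ln t)"
proof (clarsimp simp: continuous_on_eq_continuous_within)
  fix t :: real assume t: "0 \<le> t"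
  show "continuous (at t within {0..}) (\<lambda>t. t powr r * ln t)"
  proof (cases "t = 0")
    case True
    then show ?thesis using lim_powr_ln[OF assms]
      by (simp add: continuous_within at_within_Ici_at_right)
  next
    case False
    then have "isCont (\<lambda>t. t powr r * ln t) t" using t by (intro continuous_intros) auto
    then show ?thesis using continuous_at_imp_continuous_within by blast
  qed
qed

lemma cont_powr0: assumes "r > (0::real)" shows "continuous_on {0..} (\<lambda>t. t powr r)"
  using assms by (intro continuous_on_powr' continuous_intros) auto

lemma hk_powr:
  fixes q c d :: real
  assumes q: "q > -1" and c: "0 \<le> c" "c \<le> d"
  shows "((\<lambda>t. t powr q) has_integral (d powr (q+1) - c powr (q+1)) / (q+1)) {c..d}"
proof -
  let ?F = "\<lambda>t. t powr (q+1) / (q+1)"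
  have "((\<lambda>t. t powr q) has_integral (?F d - ?F c)) {c..d}"
  proof (rule fundamental_theorem_of_calculus_interior)
    show "c \<le> d" by fact
    have "continuous_on {c..d} (\<lambda>t. t powr (q+1))"
      by (rule continuous_on_subset[OF cont_powr0]) (use q c in auto)
    then show "continuous_on {c..d} ?F"
      by (rule continuous_on_divide[OF _ continuous_on_const]) (use q in auto)
    fix t assume t: "t \<in> {c<..<d}"
    then have tp: "t > 0" using c by auto
    have "(?F has_real_derivative ((q+1) * t powr (q+1-1)) / (q+1)) (at t)"
      by (rule DERIV_cdivide[OF has_real_derivative_powr[OF tp]])
    then show "(?F has_vector_derivative t powr q) (at t)"
      using q by (simp add: has_real_derivative_iff_has_vector_derivative[symmetric])
  qed
  then show ?thesis by (simp add: diff_divide_distrib)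
qed

definition Fln :: "real \<Rightarrow> real \<Rightarrow> real" where
  "Fln q t = t powr (q+1) * ln t / (q+1) - t powr (q+1) / (q+1)^2"

lemma hk_powr_ln:
  fixes q c d :: real
  assumes q: "q > -1" and c: "0 \<le> c" "c \<le> d"
  shows "((\<lambda>t. t powr q * ln t) has_integral (Fln q d - Fln q c)) {c..d}"
proof (rule fundamental_theorem_of_calculus_interior)
  show "c \<le> d" by fact
  have "continuous_on {c..d} (\<lambda>t. t powr (q+1))"
    by (rule continuous_on_subset[OF cont_powr0]) (use q c in auto)
  moreover have c2: "continuous_on {c..d} (\<lambda>t. t powr (q+1) * ln t)"
    by (rule continuous_on_subset[OF cont_powr_ln]) (use q c in auto)
  ultimately show "continuous_on {c..d} (Fln q)" unfolding Fln_def
    by (intro continuous_on_diff continuous_on_divide continuous_on_const) (use q in auto)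
  fix t assume t: "t \<in> {c<..<d}"
  then have tp: "t > 0" using c by auto
  have D: "(Fln q has_real_derivative
      (((q+1) * t powr (q+1-1) * ln t + inverse t * t powr (q+1)) / (q+1) - (q+1) * t powr (q+1-1) / (q+1)^2)) (at t)"
    unfolding Fln_def
    by (rule DERIV_diff[OF DERIV_cdivide[OF DERIV_mult[OF has_real_derivative_powr[OF tp] DERIV_ln[OF tp]]]
         DERIV_cdivide[OF has_real_derivative_powr[OF tp]]])
  have e1: "t powr (q+1-1) = t powr q" by simp
  have e2: "inverse t * t powr (q+1) = t powr q" using tp by (simp add: powr_add)
  have eq: "(((q+1) * t powr (q+1-1) * ln t + inverse t * t powr (q+1)) / (q+1) - (q+1) * t powr (q+1-1) / (q+1)^2)
     = t powr q * ln t"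
  proof -
    have qn: "q + 1 \<noteq> 0" using q by simp
    have "(q+1) * t powr q / (q+1)^2 = t powr q / (q+1)" using qn by (simp add: power2_eq_square)
    then have "((q+1) * t powr q * ln t + t powr q) / (q+1) - (q+1) * t powr q / (q+1)^2
      = ((q+1) * t powr q * ln t + t powr q) / (q+1) - t powr q / (q+1)" by simp
    also have "\<dots> = t powr q * ln t" using qn by (simp add: diff_divide_distrib[symmetric])
    finally show ?thesis unfolding e1 e2 .
  qed
  have "(Fln q has_real_derivative t powr q * ln t) (at t)" using D unfolding eq .
  then show "(Fln q has_vector_derivative t powr q * ln t) (at t)"
    by (simp add: has_real_derivative_iff_has_vector_derivative[symmetric])
qed

lemma hk_lborel:
  fixes f :: "real \<Rightarrow> real"
  assumes I: "(f has_integral V) {c..d}" and nn: "\<And>t. t \<in> {c..d} \<Longrightarrow> 0 \<le> f t"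
    and m: "f \<in> borel_measurable borel"
  shows "set_integrable lborel {c..d} f \<and> (LBINT t:{c..d}. f t) = V"
proof -
  have "f absolutely_integrable_on {c..d}"
    using I nn by (intro nonnegative_absolutely_integrable_1) (auto simp: integrable_on_def)
  then have "integrable lebesgue (\<lambda>x. indicator {c..d} x *\<^sub>R f x)"
    by (simp add: set_integrable_def)
  moreover have "(\<lambda>x. indicator {c..d} x *\<^sub>R f x) \<in> borel_measurable lborel"
    using m by measurable
  ultimately have si: "set_integrable lborel {c..d} f"
    unfolding set_integrable_def using integrable_completion by blast
  then show ?thesis using set_borel_integral_eq_integral(2)[OF si] I
    by (simp add: integral_unique)
qed

lemma hk_lborel_neg:
  fixes f :: "real \<Rightarrow> real"
  assumes I: "(f has_integral V) {c..d}" and nn: "\<And>t. t \<in> {c..d} \<Longrightarrow> f t \<le> 0"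
    and m: "f \<in> borel_measurable borel"
  shows "set_integrable lborel {c..d} f \<and> (LBINT t:{c..d}. f t) = V"
proof -
  have "set_integrable lborel {c..d} (\<lambda>t. - f t) \<and> (LBINT t:{c..d}. - f t) = - V"
    using nn m by (intro hk_lborel has_integral_neg I) auto
  then have A: "set_integrable lborel {c..d} (\<lambda>t. - f t)" and B: "(LBINT t:{c..d}. - f t) = - V" by auto
  have "set_integrable lborel {c..d} (\<lambda>t. (-1) * (- f t))"
    using A by (rule set_integrable_mult_right)
  then have C: "set_integrable lborel {c..d} f" by simp
  have "(LBINT t:{c..d}. - f t) = - (LBINT t:{c..d}. f t)" using C by (rule set_integral_uminus)
  then show ?thesis using B C by simp
qed

lemma CI:
  fixes p c d :: real
  assumes p: "0 < p" "p < 1" and c: "0 \<le> c" "c < d"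
  shows "ln ((d - c) / (d powr p - c powr p))
         + (p - 1) * (d powr p * ln d - c powr p * ln c) / (d powr p - c powr p) \<le> 0"
proof -
  have d: "d > 0" using c by auto
  define D where "D = d powr p - c powr p"
  have Dp: "D > 0" unfolding D_def using powr_less_mono2[OF p(1) c] by simp
  define X where "X = d powr (p-1) * (d-c) / D"
  have Xp: "X > 0" unfolding X_def using Dp d c by auto
  have inv: "d powr (1-p) * d powr (p-1) = 1" using d by (simp add: powr_add[symmetric])
  have h1: "(d-c)/D = d powr (1-p) * X" unfolding X_def using inv
    by (simp add: mult.assoc[symmetric])
  have h2: "ln ((d-c)/D) = (1-p) * ln d + ln X"
    unfolding h1 using d Xp by (simp add: ln_mult)
  have h3: "ln X \<le> X - 1" using Xp by (rule ln_le_minus_one)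
  define E where "E = c powr p * (1 + (1-p) * (ln c - ln d)) - c * d powr (p-1)"
  have dd: "d powr (p-1) * d = d powr p" using d by (simp add: powr_diff)
  have Eeq: "((1-p) * ln d + X - 1) * D + (p - 1) * (d powr p * ln d - c powr p * ln c) = E"
  proof -
    have "X * D = d powr (p-1) * (d - c)" unfolding X_def using Dp by simp
    then have "X * D = d powr (p-1) * d - d powr (p-1) * c" by (simp add: right_diff_distrib)
    then have "X * D = d powr p - c * d powr (p-1)" using dd by simp
    then show ?thesis unfolding E_def D_def by (simp add: algebra_simps)
  qed
  have Ele: "E \<le> 0"
  proof (cases "c = 0")
    case True then show ?thesis unfolding E_def by simp
  next
    case False
    then have cp: "c > 0" using c by auto
    define z where "z = (c/d) powr (1-p)"
    have zp: "z > 0" unfolding z_def using cp d by simp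
    have lz: "ln z = (1-p) * (ln c - ln d)" unfolding z_def using cp d by (simp add: ln_div)
    have "ln z \<le> z - 1" using zp by (rule ln_le_minus_one)
    then have "1 + (1-p) * (ln c - ln d) \<le> z" using lz by simp
    then have "c powr p * (1 + (1-p) * (ln c - ln d)) \<le> c powr p * z"
      using cp by (intro mult_left_mono) auto
    also have "c powr p * z = c * d powr (p-1)"
    proof -
      have "c powr p * z = c powr p * c powr (1-p) / d powr (1-p)"
        unfolding z_def using cp d by (simp add: powr_divide)
      also have "c powr p * c powr (1-p) = c" using cp by (simp add: powr_add[symmetric])
      also have "c / d powr (1-p) = c * d powr (p-1)"
        using inv d by (simp add: field_simps)
      finally show ?thesis .
    qed
    finally show ?thesis unfolding E_def by simp
  qed
  have "ln ((d-c)/D) + (p - 1) * (d powr p * ln d - c powr p * ln c) / D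
        \<le> (1-p) * ln d + X - 1 + (p - 1) * (d powr p * ln d - c powr p * ln c) / D"
    using h2 h3 by simp
  also have "\<dots> = E / D" unfolding Eeq[symmetric] using Dp by (simp add: field_simps)
  also have "\<dots> \<le> 0" using Ele Dp by (simp add: divide_nonpos_pos)
  finally show ?thesis unfolding D_def .
qed

lemma LI0:
  fixes q c d :: real
  assumes q: "q > -1" and c: "0 \<le> c" "c \<le> d"
  shows "set_integrable lborel {c..d} (\<lambda>t. t powr q) \<and>
         (LBINT t:{c..d}. t powr q) = (d powr (q+1) - c powr (q+1)) / (q+1)"
  by (rule hk_lborel[OF hk_powr[OF q c]]) auto

lemma LI1:
  fixes q c d :: real
  assumes q: "q > -1" and c: "0 \<le> c" "c \<le> d" and d: "d \<le> 1"
  shows "set_integrable lborel {c..d} (\<lambda>t. t powr q * ln t) \<and>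
         (LBINT t:{c..d}. t powr q * ln t) = Fln q d - Fln q c"
proof (rule hk_lborel_neg[OF hk_powr_ln[OF q c]])
  fix t assume t: "t \<in> {c..d}"
  show "t powr q * ln t \<le> 0"
  proof (cases "t = 0")
    case False
    then have "t > 0" using t c by auto
    then have "ln t \<le> 0" using t d by auto
    then show ?thesis by (intro mult_nonneg_nonpos) auto
  qed simp
qed auto

lemma RH_alg:
  fixes p c d :: real
  assumes p: "0 < p" "p < 1" and c: "0 \<le> c" "c < d"
  shows "ln ((d - c) / ((d powr p - c powr p) / p)) +
     (p - 1) * ((d powr p * ln d / p - d powr p / p^2) - (c powr p * ln c / p - c powr p / p^2))
       / ((d powr p - c powr p) / p) \<le> 1/p - 1 + ln p"
proof -
  define D where "D = d powr p - c powr p"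
  define N where "N = d powr p * ln d - c powr p * ln c"
  have Dp: "D > 0" unfolding D_def using powr_less_mono2[OF p(1) c] by simp
  have dc: "d - c > 0" using c by simp
  have e1: "ln ((d - c) / (D / p)) = ln p + ln ((d-c)/D)"
    using Dp dc p by (simp add: ln_mult ln_div)
  have e2: "(d powr p * ln d / p - d powr p / p^2) - (c powr p * ln c / p - c powr p / p^2) = N/p - D/p^2"
    unfolding N_def D_def using p by (simp add: field_simps)
  have e3: "(p - 1) * (N/p - D/p^2) / (D/p) = (p-1) * N / D + (1/p - 1)"
    using Dp p by (simp add: field_simps power2_eq_square)
  have "ln ((d-c)/D) + (p-1) * N / D \<le> 0" unfolding D_def N_def using CI[OF p c] by simp
  then show ?thesis unfolding D_def[symmetric] e1 e2 e3 by simp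
qed


lemma g_gt1:
  fixes Q g :: real
  assumes Q: "Q > 0" and g_root: "g - ln g = Q + 1"
    and g_larger: "\<forall>h>0. h - ln h = Q + 1 \<longrightarrow> h \<le> g"
  shows "g > 1"
proof -
  let ?f = "\<lambda>t::real. t - ln t"
  have f1: "?f 1 \<le> Q + 1" using Q by simp
  have "ln (Q+1) \<le> Q" using ln_le_minus_one[of "Q+1"] Q by simp
  moreover have "ln (2 * (Q+1)) = ln 2 + ln (Q+1)" using Q by (subst ln_mult) auto
  ultimately have "ln (2 * (Q+1)) \<le> Q + 1" using ln_2_less_1 by linarith
  then have f2: "Q + 1 \<le> ?f (2 * (Q+1))" by simp
  have "\<forall>t. 1 \<le> t \<and> t \<le> 2 * (Q+1) \<longrightarrow> isCont ?f t"
    by (auto intro!: continuous_intros)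
  then obtain h where h: "1 \<le> h" "h \<le> 2*(Q+1)" "?f h = Q + 1"
    using IVT[of ?f 1 "Q+1" "2*(Q+1)", OF f1 f2] Q by auto
  have "h \<noteq> 1" using h(3) Q by auto
  then have "h > 1" using h by simp
  moreover have "h \<le> g" using g_larger h by auto
  ultimately show ?thesis by simp
qed


lemma part1_core:
  fixes Q x g :: real and w :: "real \<Rightarrow> real"
  assumes g1: "g > 1" and Qg: "Q = g - 1 - ln g" and x: "x > 0"
    and w_def: "w = (\<lambda>t. x / g * t powr ((1 - g) / g))"
  and c: "0 \<le> c" "c < d" and d: "d \<le> 1"
  shows "avg c d (\<lambda>t. w t / avg c d w * ln (w t / avg c d w)) \<le> Q"
proof -
  define p where "p = 1/g"
  define a where "a = (1-g)/g"
  have ap: "a + 1 = p" unfolding a_def p_def using g1 by (simp add: field_simps)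
  have p01: "0 < p" "p < 1" unfolding p_def using g1 by auto
  have am: "a > -1" using ap p01 by simp
  have ap2: "a = p - 1" using ap by simp
  have w: "\<And>t. w t = x/g * t powr a" unfolding w_def a_def by simp
  have Qp: "Q = 1/p - 1 + ln p" unfolding Qg p_def using g1 by (simp add: ln_div)
  define I0 where "I0 = (d powr p - c powr p) / p"
  define I1 where "I1 = Fln a d - Fln a c"
  have L0: "set_integrable lborel {c..d} (\<lambda>t. t powr a)" "(LBINT t:{c..d}. t powr a) = I0"
    using LI0[OF am c(1)] c unfolding I0_def ap by auto
  have L1: "set_integrable lborel {c..d} (\<lambda>t. t powr a * ln t)" "(LBINT t:{c..d}. t powr a * ln t) = I1"
    using LI1[OF am c(1) _ d] c unfolding I1_def by auto
  have I0p: "I0 > 0" unfolding I0_def using powr_less_mono2[OF p01(1) c] p01 by simp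
  define A where "A = x/g * I0/(d-c)"
  have Aeq: "avg c d w = A"
    unfolding avg_def A_def w using L0 by (simp add: set_integral_mult_right)
  define K where "K = (d-c)/I0"
  have Kp: "K > 0" unfolding K_def using I0p c by simp
  have wA: "\<And>t. w t / A = K * t powr a"
    unfolding w A_def K_def using x g1 c I0p by (simp add: field_simps)
  have pt: "\<forall>t. t \<in> {c..d} \<longrightarrow> w t / A * ln (w t / A) = (K * ln K) * t powr a + (K * a) * (t powr a * ln t)"
  proof (intro allI impI)
    fix t assume t: "t \<in> {c..d}"
    show "w t / A * ln (w t / A) = (K * ln K) * t powr a + (K * a) * (t powr a * ln t)"
    proof (cases "t = 0")
      case True then show ?thesis unfolding wA by simp
    next
      case False
      then have tp: "t > 0" using t c by auto
      have "ln (K * t powr a) = ln K + a * ln t" using Kp tp by (simp add: ln_mult)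
      then show ?thesis unfolding wA by (simp add: algebra_simps)
    qed
  qed
  have "(LBINT t:{c..d}. w t / A * ln (w t / A)) = (LBINT t:{c..d}. (K * ln K) * t powr a + (K * a) * (t powr a * ln t))"
    by (rule set_lebesgue_integral_cong[OF _ pt]) simp
  also have "\<dots> = (K * ln K) * I0 + (K * a) * I1"
    using L0 L1 by (simp add: set_integral_mult_right)
  finally have int: "(LBINT t:{c..d}. w t / A * ln (w t / A)) = (K * ln K) * I0 + (K * a) * I1" .
  have "avg c d (\<lambda>t. w t / avg c d w * ln (w t / avg c d w)) = ((K * ln K) * I0 + (K * a) * I1) / (d-c)"
    unfolding Aeq by (simp only: avg_def int)
  also have "\<dots> = ln ((d-c)/I0) + a * I1 / I0"
    unfolding K_def using I0p c by (simp add: field_simps)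
  also have "\<dots> \<le> Q"
  proof -
    have "Fln a d - Fln a c = (d powr p * ln d / p - d powr p / p^2) - (c powr p * ln c / p - c powr p / p^2)"
      unfolding Fln_def ap ..
    then show ?thesis using RH_alg[OF p01 c] unfolding Qp I1_def I0_def ap[symmetric]
      by (simp add: ap2)
  qed
  finally show ?thesis .
qed

lemma part1:
  fixes Q x g :: real and w :: "real \<Rightarrow> real"
  assumes g1: "g > 1" and Qg: "Q = g - 1 - ln g" and x: "x > 0"
    and w_def: "w = (\<lambda>t. x / g * t powr ((1 - g) / g))"
  shows "RH1_01 w \<le> ereal Q"
  unfolding RH1_01_def
proof (rule SUP_least, clarify)
  fix c d :: real assume c: "0 \<le> c" "c < d" "d \<le> 1"
  show "ereal (avg (fst (c, d)) (snd (c, d)) (\<lambda>t. w t / avg (fst (c, d)) (snd (c, d)) w *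
     ln (w t / avg (fst (c, d)) (snd (c, d)) w))) \<le> ereal Q"
    using part1_core[OF g1 Qg x w_def c] by simp
qed


lemma part2:
  fixes x g \<epsilon> :: real and w :: "real \<Rightarrow> real"
  assumes g1: "g > 1" and x: "x > 0"
    and w_def: "w = (\<lambda>t. x / g * t powr ((1 - g) / g))"
    and e: "0 < \<epsilon>" "\<epsilon> < 1 / (g - 1)"
  shows "set_integrable lborel {0..1} (\<lambda>t. w t powr (1 + \<epsilon>)) \<and>
           avg 0 1 (\<lambda>t. w t powr (1 + \<epsilon>)) =
             Bfun g \<epsilon> (avg 0 1 w) (avg 0 1 (\<lambda>t. w t * ln (w t)))"
proof -
  define p where "p = 1/g"
  define a where "a = (1-g)/g"
  have ap: "a + 1 = p" unfolding a_def p_def using g1 by (simp add: field_simps)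
  have p01: "0 < p" "p < 1" unfolding p_def using g1 by auto
  have am: "a > -1" using ap p01 by simp
  have w: "\<And>t. w t = x/g * t powr a" unfolding w_def a_def by simp
  have L0: "set_integrable lborel {0..1} (\<lambda>t. t powr a)" "(LBINT t:{0..1}. t powr a) = g"
    using LI0[OF am, of 0 1] p01 unfolding ap p_def by auto
  have L1: "set_integrable lborel {0..1} (\<lambda>t. t powr a * ln t)" "(LBINT t:{0..1}. t powr a * ln t) = (- (g^2))"
    using LI1[OF am, of 0 1] p01 unfolding Fln_def ap p_def by (auto simp: power2_eq_square)
  have avgw: "avg 0 1 w = x"
    unfolding avg_def w using L0 g1 by (simp add: set_integral_mult_right)
  have pt: "\<forall>t. t \<in> {0..1} \<longrightarrow> w t * ln (w t) = (x/g * ln (x/g)) * t powr a + (x/g * a) * (t powr a * ln t)"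
  proof (intro allI impI)
    fix t :: real assume t: "t \<in> {0..1}"
    show "w t * ln (w t) = (x/g * ln (x/g)) * t powr a + (x/g * a) * (t powr a * ln t)"
    proof (cases "t = 0")
      case True then show ?thesis unfolding w by simp
    next
      case False
      then have tp: "t > 0" using t by auto
      have "ln (x/g * t powr a) = ln (x/g) + a * ln t" using x g1 tp by (subst ln_mult) auto
      then show ?thesis unfolding w by (simp add: algebra_simps)
    qed
  qed
  define y where "y = x * ln (x/g) + (g - 1) * x"
  have "(LBINT t:{0..1}. w t * ln (w t)) = (LBINT t:{0..1}. (x/g * ln (x/g)) * t powr a + (x/g * a) * (t powr a * ln t))"
    by (rule set_lebesgue_integral_cong[OF _ pt]) simp
  also have "\<dots> = (x/g * ln (x/g)) * g + (x/g * a) * (- (g^2))"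
    using L0 L1 by (simp add: set_integral_mult_right)
  also have "\<dots> = y" unfolding y_def a_def using g1 by (simp add: field_simps power2_eq_square)
  finally have avgwl: "avg 0 1 (\<lambda>t. w t * ln (w t)) = y" unfolding avg_def by simp
  have The: "(THE v. 0 < v \<and> v \<le> x \<and> x \<le> g * v \<and> y = (ln v + g) * x - v * g) = x / g"
  proof (rule the_equality)
    show "0 < x / g \<and> x / g \<le> x \<and> x \<le> g * (x / g) \<and> y = (ln (x / g) + g) * x - x / g * g"
      using x g1 unfolding y_def by (auto simp: field_simps)
  next
    fix v assume v: "0 < v \<and> v \<le> x \<and> x \<le> g * v \<and> y = (ln v + g) * x - v * g"
    define z where "z = v * g / x"
    have zp: "z > 0" unfolding z_def using v x g1 by auto
    have vz: "v = z * (x/g)" unfolding z_def using x g1 by (simp add: field_simps)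
    have lv: "ln v = ln z + ln (x/g)"
      using zp x g1 by (subst vz, subst ln_mult) auto
    have "x * (ln z - z + 1) = 0"
      using v unfolding y_def lv z_def using x g1 by (simp add: field_simps)
    then have "ln z = z - 1" using x by simp
    then have "z = 1" using zp ln_eq_minus_one by blast
    then show "v = x / g" unfolding z_def using x g1 by (simp add: field_simps)
  qed
  define q where "q = a * (1 + \<epsilon>)"
  have den: "1 + \<epsilon> - g * \<epsilon> > 0"
  proof -
    have "\<epsilon> * (g - 1) < 1" using e g1 by (simp add: field_simps)
    then show ?thesis by (simp add: algebra_simps)
  qed
  have q1: "q + 1 = (1 + \<epsilon> - g * \<epsilon>) / g" unfolding q_def a_def using g1 by (simp add: field_simps)
  have "q + 1 > 0" unfolding q1 using den g1 by simp
  then have qm: "q > -1" by simp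
  have L2: "set_integrable lborel {0..1} (\<lambda>t. t powr q)" "(LBINT t:{0..1}. t powr q) = 1 / (q+1)"
    using LI0[OF qm, of 0 1] qm by auto
  have pt2: "\<forall>t. t \<in> {0..1} \<longrightarrow> w t powr (1 + \<epsilon>) = (x/g) powr (1 + \<epsilon>) * t powr q"
  proof (intro allI impI)
    fix t :: real assume t: "t \<in> {0..1}"
    have "w t powr (1 + \<epsilon>) = (x/g) powr (1 + \<epsilon>) * (t powr a) powr (1 + \<epsilon>)"
      unfolding w using x g1 t by (subst powr_mult) auto
    also have "(t powr a) powr (1 + \<epsilon>) = t powr q" unfolding q_def by (simp add: powr_powr)
    finally show "w t powr (1 + \<epsilon>) = (x/g) powr (1 + \<epsilon>) * t powr q" .
  qed
  have SI: "set_integrable lborel {0..1} (\<lambda>t. w t powr (1 + \<epsilon>))"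
    using set_integrable_cong[OF refl refl, of "{0..1}" "\<lambda>t. w t powr (1 + \<epsilon>)" "\<lambda>t. (x/g) powr (1 + \<epsilon>) * t powr q" lborel]
      pt2 L2(1) by auto
  have "(LBINT t:{0..1}. w t powr (1 + \<epsilon>)) = (LBINT t:{0..1}. (x/g) powr (1 + \<epsilon>) * t powr q)"
    by (rule set_lebesgue_integral_cong[OF _ pt2]) simp
  also have "\<dots> = (x/g) powr (1 + \<epsilon>) / (q + 1)" using L2 by (simp add: set_integral_mult_right)
  finally have I: "avg 0 1 (\<lambda>t. w t powr (1 + \<epsilon>)) = (x/g) powr (1 + \<epsilon>) / (q + 1)"
    unfolding avg_def by simp
  have pe: "(x/g) powr (1 + \<epsilon>) = (x/g) * (x/g) powr \<epsilon>" using x g1 by (simp add: powr_add)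
  have "Bfun g \<epsilon> (avg 0 1 w) (avg 0 1 (\<lambda>t. w t * ln (w t))) =
        (x/g) powr \<epsilon> / (1 + \<epsilon> - g * \<epsilon>) * (x * (1 + \<epsilon>) - \<epsilon> * g * (x/g))"
    unfolding Bfun_def avgw avgwl Let_def The ..
  also have "\<dots> = (x/g) powr (1 + \<epsilon>) / (q + 1)"
    unfolding pe q1 using g1 den by (simp add: field_simps)
  finally show ?thesis using SI I by simp
qed


lemma hk_inv:
  fixes C s :: real
  assumes s: "0 < s" "s \<le> 1"
  shows "((\<lambda>t. C / t) has_integral (C * (- ln s))) {s..1}"
proof -
  have "((\<lambda>t. C / t) has_integral (C * ln 1 - C * ln s)) {s..1}"
  proof (rule fundamental_theorem_of_calculus_interior)
    show "s \<le> 1" by fact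
    show "continuous_on {s..1} (\<lambda>t. C * ln t)" using s by (intro continuous_intros) auto
    fix t assume t: "t \<in> {s<..<1}"
    then have tp: "t > 0" using s by auto
    have "((\<lambda>t. C * ln t) has_real_derivative C * inverse t) (at t)"
      by (intro DERIV_cmult DERIV_ln tp)
    then show "((\<lambda>t. C * ln t) has_vector_derivative C / t) (at t)"
      by (simp add: has_real_derivative_iff_has_vector_derivative[symmetric] divide_inverse)
  qed
  then show ?thesis by simp
qed

lemma part3:
  fixes x g :: real and w :: "real \<Rightarrow> real"
  assumes g1: "g > 1" and x: "x > 0"
    and w_def: "w = (\<lambda>t. x / g * t powr ((1 - g) / g))"
  shows "(\<integral>\<^sup>+ t \<in> {0..1}. ennreal (w t powr (1 + 1 / (g - 1))) \<partial>lborel) = \<infinity>"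
proof -
  define r where "r = 1 + 1 / (g - 1)"
  define a where "a = (1-g)/g"
  have w: "\<And>t. w t = x/g * t powr a" unfolding w_def a_def by simp
  have ar: "a * r = -1" unfolding a_def r_def using g1 by (simp add: field_simps)
  define C where "C = (x/g) powr r"
  have Cp: "C > 0" unfolding C_def using x g1 by simp
  have pt: "\<And>t. t > 0 \<Longrightarrow> w t powr r = C / t"
  proof -
    fix t :: real assume tp: "t > 0"
    have "w t powr r = (x/g) powr r * (t powr a) powr r"
      unfolding w using x g1 tp by (subst powr_mult) auto
    also have "(t powr a) powr r = t powr (-1)" using ar by (simp add: powr_powr)
    also have "t powr (-1) = 1 / t" using tp by (simp add: powr_minus_divide)
    finally show "w t powr r = C / t" unfolding C_def by simp
  qed
  define N where "N = (\<integral>\<^sup>+ t. ennreal (w t powr r) * indicator {0..1} t \<partial>lborel)"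
  have low: "ennreal (C * (- ln s)) \<le> N" if s: "0 < s" "s \<le> 1" for s
  proof -
    have "ennreal (C * (- ln s)) = (\<integral>\<^sup>+ t. ennreal (C / t) * indicator {s..1} t \<partial>lborel)"
      using nn_integral_has_integral_lebesgue'[OF _ hk_inv[OF s, of C]] s Cp by auto
    also have "\<dots> \<le> N" unfolding N_def
    proof (rule nn_integral_mono)
      fix t :: real
      show "ennreal (C / t) * indicator {s..1} t \<le> ennreal (w t powr r) * indicator {0..1} t"
      proof (cases "t \<in> {s..1}")
        case True
        then have "t > 0" using s by auto
        then show ?thesis using True s pt by auto
      qed simp
    qed
    finally show ?thesis .
  qed
  have big: "ennreal M \<le> N" if M: "M \<ge> 0" for M
  proof -
    define s where "s = exp (- (M / C))"
    have s: "0 < s" "s \<le> 1" unfolding s_def using M Cp by auto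
    have "C * (- ln s) = M" unfolding s_def using Cp by simp
    then show ?thesis using low[OF s] by simp
  qed
  have "N = \<infinity>"
  proof (cases N rule: ennreal_cases)
    case (real r)
    then have "ennreal (r + 1) \<le> ennreal r" using big[of "r+1"] by simp
    then have "r + 1 \<le> r" using real by (simp add: ennreal_le_iff)
    then show ?thesis by simp
  qed simp
  then show ?thesis unfolding N_def r_def .
qed

theorem lemma7:
  fixes Q x g :: real and w :: "real \<Rightarrow> real"
  assumes Q: "Q > 0"
    and g_pos: "g > 0" and g_root: "g - ln g = Q + 1"
    and g_larger: "\<forall>h>0. h - ln h = Q + 1 \<longrightarrow> h \<le> g"
    and x: "x > 0"
    and w_def: "w = (\<lambda>t. x / g * t powr ((1 - g) / g))"
  shows "RH1_01 w \<le> ereal Q \<and>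
         (\<forall>\<epsilon>. 0 < \<epsilon> \<and> \<epsilon> < 1 / (g - 1) \<longrightarrow>
           set_integrable lborel {0..1} (\<lambda>t. w t powr (1 + \<epsilon>)) \<and>
           avg 0 1 (\<lambda>t. w t powr (1 + \<epsilon>)) =
             Bfun g \<epsilon> (avg 0 1 w) (avg 0 1 (\<lambda>t. w t * ln (w t)))) \<and>
         (\<integral>\<^sup>+ t \<in> {0..1}. ennreal (w t powr (1 + 1 / (g - 1))) \<partial>lborel) = \<infinity>"
proof -
  have g1: "g > 1" by (rule g_gt1[OF Q g_root g_larger])
  have Qg: "Q = g - 1 - ln g" using g_root by simp
  show ?thesis
    using part1[OF g1 Qg x w_def] part2[OF g1 x w_def] part3[OF g1 x w_def] by blast
qed

end
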